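(* Let $\mathfrak g$ be a nonsemisimple complex Lie algebra, $\mathfrak p$ a nonperfect ideal of $\mathfrak g$, and $\phi:\mathfrak p\to\mathbb C$ a Lie algebra homomorphism. If $\mathfrak g$ admits a bland irreducible quasi-Whittaker module of type $\phi$, then $\phi$ is extendable.
   Context: A Lie algebra homomorphism to $\mathbb C$ is a linear map vanishing on the derived subalgebra. For a $\mathfrak g$-module $V$, $V_\phi=\{v\in V: pv=\phi(p)v\ \forall p\in\mathfrak p\}$ (quasi-Whittaker vectors of type $\phi$); $V$ is a quasi-Whittaker module of type $\phi$ if generated by an element of $V_\phi$; an irreducible such $V$ is bland if $\dim V_\phi=1$. The Whittaker annihilator is $\mathfrak g^{\phi}=\{g\in\mathfrak g:\phi([g,p])=0\ \forall p\in\mathfrak p\}$. $\phi$ is extendable if there is a Lie algebra homomorphism $\phi':\mathfrak g^\phi\to\mathbb C$ with $\phi'|_{\mathfrak p}=\phi$. *)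

theory Defs
  imports "HOL-Analysis.Analysis"
begin

text \<open>A complex Lie algebra is the whole type 'g with scaling sg and bracket br.\<close>

definition lie_algebra :: "(complex \<Rightarrow> 'g::ab_group_add \<Rightarrow> 'g) \<Rightarrow> ('g \<Rightarrow> 'g \<Rightarrow> 'g) \<Rightarrow> bool" where
  "lie_algebra sg br \<longleftrightarrow> vector_space sg \<and>
     (\<forall>x y z. br (x + y) z = br x z + br y z) \<and>
     (\<forall>c x y. br (sg c x) y = sg c (br x y)) \<and>
     (\<forall>x y z. br x (y + z) = br x y + br x z) \<and>
     (\<forall>c x y. br x (sg c y) = sg c (br x y)) \<and>
     (\<forall>x. br x x = 0) \<and>
     (\<forall>x y z. br x (br y z) + br y (br z x) + br z (br x y) = 0)"

definition lie_bracket_set :: "(complex \<Rightarrow> 'g::ab_group_add \<Rightarrow> 'g) \<Rightarrow> ('g \<Rightarrow> 'g \<Rightarrow> 'g) \<Rightarrow> 'g set \<Rightarrow> 'g set \<Rightarrow> 'g set" where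
  "lie_bracket_set sg br A B = module.span sg {br a b | a b. a \<in> A \<and> b \<in> B}"

definition lie_ideal :: "(complex \<Rightarrow> 'g::ab_group_add \<Rightarrow> 'g) \<Rightarrow> ('g \<Rightarrow> 'g \<Rightarrow> 'g) \<Rightarrow> 'g set \<Rightarrow> bool" where
  "lie_ideal sg br I \<longleftrightarrow> module.subspace sg I \<and> (\<forall>x y. y \<in> I \<longrightarrow> br x y \<in> I)"

primrec derived_series :: "(complex \<Rightarrow> 'g::ab_group_add \<Rightarrow> 'g) \<Rightarrow> ('g \<Rightarrow> 'g \<Rightarrow> 'g) \<Rightarrow> 'g set \<Rightarrow> nat \<Rightarrow> 'g set" where
  "derived_series sg br I 0 = I"
| "derived_series sg br I (Suc n) =
     lie_bracket_set sg br (derived_series sg br I n) (derived_series sg br I n)"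

definition lie_solvable :: "(complex \<Rightarrow> 'g::ab_group_add \<Rightarrow> 'g) \<Rightarrow> ('g \<Rightarrow> 'g \<Rightarrow> 'g) \<Rightarrow> 'g set \<Rightarrow> bool" where
  "lie_solvable sg br I \<longleftrightarrow> (\<exists>n. derived_series sg br I n = {0})"

definition lie_semisimple :: "(complex \<Rightarrow> 'g::ab_group_add \<Rightarrow> 'g) \<Rightarrow> ('g \<Rightarrow> 'g \<Rightarrow> 'g) \<Rightarrow> bool" where
  "lie_semisimple sg br \<longleftrightarrow> (\<forall>I. lie_ideal sg br I \<and> lie_solvable sg br I \<longrightarrow> I = {0})"

definition lie_perfect :: "(complex \<Rightarrow> 'g::ab_group_add \<Rightarrow> 'g) \<Rightarrow> ('g \<Rightarrow> 'g \<Rightarrow> 'g) \<Rightarrow> 'g set \<Rightarrow> bool" where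
  "lie_perfect sg br P \<longleftrightarrow> lie_bracket_set sg br P P = P"

definition lie_hom_to_C :: "(complex \<Rightarrow> 'g::ab_group_add \<Rightarrow> 'g) \<Rightarrow> ('g \<Rightarrow> 'g \<Rightarrow> 'g) \<Rightarrow> 'g set \<Rightarrow> ('g \<Rightarrow> complex) \<Rightarrow> bool" where
  "lie_hom_to_C sg br S f \<longleftrightarrow>
     (\<forall>x\<in>S. \<forall>y\<in>S. f (x + y) = f x + f y) \<and>
     (\<forall>c. \<forall>x\<in>S. f (sg c x) = c * f x) \<and>
     (\<forall>z\<in>lie_bracket_set sg br S S. f z = 0)"

definition lie_module :: "(complex \<Rightarrow> 'g::ab_group_add \<Rightarrow> 'g) \<Rightarrow> ('g \<Rightarrow> 'g \<Rightarrow> 'g) \<Rightarrow>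
    (complex \<Rightarrow> 'v::ab_group_add \<Rightarrow> 'v) \<Rightarrow> ('g \<Rightarrow> 'v \<Rightarrow> 'v) \<Rightarrow> bool" where
  "lie_module sg br sv act \<longleftrightarrow> vector_space sv \<and>
     (\<forall>x y v. act (x + y) v = act x v + act y v) \<and>
     (\<forall>c x v. act (sg c x) v = sv c (act x v)) \<and>
     (\<forall>x v w. act x (v + w) = act x v + act x w) \<and>
     (\<forall>c x v. act x (sv c v) = sv c (act x v)) \<and>
     (\<forall>x y v. act (br x y) v = act x (act y v) - act y (act x v))"

definition submodule :: "(complex \<Rightarrow> 'v::ab_group_add \<Rightarrow> 'v) \<Rightarrow> ('g \<Rightarrow> 'v \<Rightarrow> 'v) \<Rightarrow> 'v set \<Rightarrow> bool" where
  "submodule sv act W \<longleftrightarrow> module.subspace sv W \<and> (\<forall>x. \<forall>w\<in>W. act x w \<in> W)"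

definition irreducible_module :: "(complex \<Rightarrow> 'v::ab_group_add \<Rightarrow> 'v) \<Rightarrow> ('g \<Rightarrow> 'v \<Rightarrow> 'v) \<Rightarrow> bool" where
  "irreducible_module sv act \<longleftrightarrow> (UNIV :: 'v set) \<noteq> {0} \<and>
     (\<forall>W. submodule sv act W \<longrightarrow> W = {0} \<or> W = UNIV)"

definition generated_submodule :: "(complex \<Rightarrow> 'v::ab_group_add \<Rightarrow> 'v) \<Rightarrow> ('g \<Rightarrow> 'v \<Rightarrow> 'v) \<Rightarrow> 'v \<Rightarrow> 'v set" where
  "generated_submodule sv act w = \<Inter>{W. submodule sv act W \<and> w \<in> W}"

definition qw_vectors :: "('g \<Rightarrow> 'v \<Rightarrow> 'v) \<Rightarrow> (complex \<Rightarrow> 'v \<Rightarrow> 'v) \<Rightarrow> 'g set \<Rightarrow> ('g \<Rightarrow> complex) \<Rightarrow> 'v set" where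
  "qw_vectors act sv P phi = {v. \<forall>p\<in>P. act p v = sv (phi p) v}"

definition quasi_whittaker_module :: "(complex \<Rightarrow> 'v::ab_group_add \<Rightarrow> 'v) \<Rightarrow> ('g \<Rightarrow> 'v \<Rightarrow> 'v) \<Rightarrow> 'g set \<Rightarrow> ('g \<Rightarrow> complex) \<Rightarrow> bool" where
  "quasi_whittaker_module sv act P phi \<longleftrightarrow>
     (\<exists>w\<in>qw_vectors act sv P phi. generated_submodule sv act w = UNIV)"

definition bland :: "(complex \<Rightarrow> 'v::ab_group_add \<Rightarrow> 'v) \<Rightarrow> ('g \<Rightarrow> 'v \<Rightarrow> 'v) \<Rightarrow> 'g set \<Rightarrow> ('g \<Rightarrow> complex) \<Rightarrow> bool" where
  "bland sv act P phi \<longleftrightarrow> irreducible_module sv act \<and> quasi_whittaker_module sv act P phi \<and>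
     vector_space.dim sv (qw_vectors act sv P phi) = 1"

definition whittaker_annihilator :: "('g \<Rightarrow> 'g \<Rightarrow> 'g) \<Rightarrow> 'g set \<Rightarrow> ('g \<Rightarrow> complex) \<Rightarrow> 'g set" where
  "whittaker_annihilator br P phi = {g. \<forall>p\<in>P. phi (br g p) = 0}"

definition extendable :: "(complex \<Rightarrow> 'g::ab_group_add \<Rightarrow> 'g) \<Rightarrow> ('g \<Rightarrow> 'g \<Rightarrow> 'g) \<Rightarrow> 'g set \<Rightarrow> ('g \<Rightarrow> complex) \<Rightarrow> bool" where
  "extendable sg br P phi \<longleftrightarrow>
     (\<exists>phi'. lie_hom_to_C sg br (whittaker_annihilator br P phi) phi' \<and> (\<forall>p\<in>P. phi' p = phi p))"

end

theory Submission
  imports Defs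
begin

theorem lemma3p6:
  fixes sg :: "complex \<Rightarrow> 'g::ab_group_add \<Rightarrow> 'g" and br :: "'g \<Rightarrow> 'g \<Rightarrow> 'g"
    and P :: "'g set" and phi :: "'g \<Rightarrow> complex"
  assumes "lie_algebra sg br"
    and "\<not> lie_semisimple sg br"
    and "lie_ideal sg br P"
    and "\<not> lie_perfect sg br P"
    and "lie_hom_to_C sg br P phi"
    and "\<exists>(sv :: complex \<Rightarrow> 'v::ab_group_add \<Rightarrow> 'v) act.
           lie_module sg br sv act \<and> bland sv act P phi"
  shows "extendable sg br P phi"
proof -
  obtain sv :: "complex \<Rightarrow> 'v \<Rightarrow> 'v" and act where M: "lie_module sg br sv act"
    and B: "bland sv act P phi" using assms(6) by blast
  interpret V: vector_space sv using M unfolding lie_module_def by blast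
  interpret G: vector_space sg using assms(1) unfolding lie_algebra_def by blast
  have addg: "\<And>x y v. act (x + y) v = act x v + act y v"
    and scg: "\<And>c x v. act (sg c x) v = sv c (act x v)"
    and addv: "\<And>x v u. act x (v + u) = act x v + act x u"
    and scv: "\<And>c x v. act x (sv c v) = sv c (act x v)"
    and brk: "\<And>x y v. act (br x y) v = act x (act y v) - act y (act x v)"
    using M unfolding lie_module_def by auto
  have bradd: "\<And>x y z. br (x + y) z = br x z + br y z" and brself: "\<And>x. br x x = 0"
    and bradd2: "\<And>x y z. br x (y + z) = br x y + br x z"
    using assms(1) unfolding lie_algebra_def by auto
  have anti: "\<And>x y. br y x = - br x y"
  proof -
    fix x y
    have "0 = br (x + y) (x + y)" using brself by simp
    also have "\<dots> = br x x + br x y + (br y x + br y y)" by (simp add: bradd bradd2)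
    finally show "br y x = - br x y" using brself by (simp add: add_eq_0_iff)
  qed
  have Psub: "G.subspace P" and Pid: "\<And>x y. y \<in> P \<Longrightarrow> br x y \<in> P"
    using assms(3) unfolding lie_ideal_def by auto
  have phiadd: "\<And>x y. x \<in> P \<Longrightarrow> y \<in> P \<Longrightarrow> phi (x + y) = phi x + phi y"
    and phisc: "\<And>c x. x \<in> P \<Longrightarrow> phi (sg c x) = c * phi x"
    using assms(5) unfolding lie_hom_to_C_def by auto
  have phineg: "\<And>x. x \<in> P \<Longrightarrow> phi (- x) = - phi x"
    using phisc[of _ "-1"] by (metis G.scale_minus_left G.scale_one mult_minus1)
  define Q where "Q = qw_vectors act sv P phi"
  have dimQ: "V.dim Q = 1" using B unfolding bland_def Q_def by simp
  obtain Bs where Bs: "Bs \<subseteq> Q" "V.independent Bs" "Q \<subseteq> V.span Bs" "card Bs = V.dim Q"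
    using V.basis_exists by blast
  then obtain w where Bw: "Bs = {w}" using dimQ by (metis card_1_singletonE)
  have w0: "w \<noteq> 0" using Bs(2) Bw V.dependent_zero by blast
  have wQ: "w \<in> Q" using Bs Bw by auto
  have Qw: "\<And>v. v \<in> Q \<Longrightarrow> \<exists>c. v = sv c w"
    using Bs(3) Bw V.span_singleton by auto
  have act0: "\<And>v. act 0 v = 0"
  proof -
    fix v have "act (0 + 0) v = act 0 v + act 0 v" by (rule addg)
    then show "act 0 v = 0" by simp
  qed
  define A where "A = whittaker_annihilator br P phi"
  have inA: "\<And>g. g \<in> A \<Longrightarrow> \<exists>c. act g w = sv c w"
  proof -
    fix g assume gA: "g \<in> A"
    have "act g w \<in> Q" unfolding Q_def qw_vectors_def
    proof (intro CollectI ballI)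
      fix p assume pP: "p \<in> P"
      have wp: "act p w = sv (phi p) w" using wQ pP unfolding Q_def qw_vectors_def by auto
      have "phi (br g p) = 0" using gA pP unfolding A_def whittaker_annihilator_def by auto
      moreover have "phi (br p g) = phi (- br g p)" using anti[of g p] by simp
      ultimately have "phi (br p g) = 0" using phineg[OF Pid[OF pP], of g] by simp
      moreover have "br p g \<in> P"
      proof -
        have "br p g = - br g p" by (rule anti)
        then show ?thesis using G.subspace_neg[OF Psub Pid[OF pP, of g]] by simp
      qed
      ultimately have "act (br p g) w = 0" using wQ unfolding Q_def qw_vectors_def by auto
      hence "act p (act g w) = act g (act p w)" using brk[of p g w] by simp
      also have "\<dots> = sv (phi p) (act g w)" using wp scv by simp
      finally show "act p (act g w) = sv (phi p) (act g w)" .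
    qed
    then show "\<exists>c. act g w = sv c w" using Qw by blast
  qed
  define phi' where "phi' g = (SOME c. act g w = sv c w)" for g
  have phi'eq: "\<And>g c. act g w = sv c w \<Longrightarrow> phi' g = c"
  proof -
    fix g c assume h: "act g w = sv c w"
    then have "act g w = sv (phi' g) w" unfolding phi'_def by (rule someI)
    with h w0 show "phi' g = c" by simp
  qed
  have T: "G.span {br a b | a b. a \<in> A \<and> b \<in> A} \<subseteq> {z. act z w = 0}"
  proof (rule G.span_minimal)
    show "{br a b | a b. a \<in> A \<and> b \<in> A} \<subseteq> {z. act z w = 0}"
    proof
      fix z assume "z \<in> {br a b | a b. a \<in> A \<and> b \<in> A}"
      then obtain a b where z: "z = br a b" "a \<in> A" "b \<in> A" by blast
      obtain ca cb where "act a w = sv ca w" "act b w = sv cb w" using inA z by metis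
      then show "z \<in> {z. act z w = 0}" using z brk scv by (simp add: mult.commute)
    qed
    show "G.subspace {z. act z w = 0}"
      unfolding G.subspace_def by (auto simp: act0 addg scg)
  qed
  show ?thesis unfolding extendable_def lie_hom_to_C_def
  proof (intro exI conjI ballI allI)
    fix x y assume "x \<in> whittaker_annihilator br P phi" "y \<in> whittaker_annihilator br P phi"
    then obtain cx cy where "act x w = sv cx w" "act y w = sv cy w" using inA A_def by metis
    then have "act (x + y) w = sv (cx + cy) w" "phi' x = cx" "phi' y = cy"
      using phi'eq addg by (auto simp: V.scale_left_distrib)
    then show "phi' (x + y) = phi' x + phi' y" using phi'eq by simp
  next
    fix c x assume "x \<in> whittaker_annihilator br P phi"
    then obtain cx where "act x w = sv cx w" using inA A_def by metis
    then have "act (sg c x) w = sv (c * cx) w" "phi' x = cx" using phi'eq scg by auto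
    then show "phi' (sg c x) = c * phi' x" using phi'eq by simp
  next
    fix z assume "z \<in> lie_bracket_set sg br (whittaker_annihilator br P phi) (whittaker_annihilator br P phi)"
    then have "act z w = 0" using T unfolding lie_bracket_set_def A_def by blast
    then show "phi' z = 0" using phi'eq[of z 0] by simp
  next
    fix p assume pP: "p \<in> P"
    then have "act p w = sv (phi p) w" using wQ unfolding Q_def qw_vectors_def by auto
    then show "phi' p = phi p" by (rule phi'eq)
  qed
qed

end
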